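(* Let $(\mathcal{F}_t)$ be a filtration. Let $\varepsilon_t = \sigma_t z_t$ with $\sigma_t = \exp(H_t)$, $H_t = \bar{H}_t + h_t$, where $\bar{H}_t = E\{H_t\mid\mathcal{F}_{t-1}\}$ is $\mathcal{F}_{t-1}$-measurable, $(h_t)$ is i.i.d. with Laplace density $\frac{1}{2\Delta}\exp(-|x|/\Delta)$, $\Delta = E|h_t|>0$, and $(z_t)$ is i.i.d. $\mathcal{N}(0,1)$, with $z_t$, $h_t$ mutually independent and independent of $\mathcal{F}_{t-1}$. Let $p_\varepsilon(\cdot\mid\mathcal{F}_{t-1})$ denote the conditional density of $\varepsilon_t$ given $\mathcal{F}_{t-1}$. If $\Delta < 1$, then as $|\varepsilon_t| \to 0$, $$p_\varepsilon(\varepsilon_t\mid\mathcal{F}_{t-1}) \sim \frac{1}{\sqrt{2\pi}\,e^{\bar{H}_t}}\cdot\frac{1}{1-\Delta^2}.$$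
   Context: $f \sim g$ means $f/g \to 1$. *)

theory Defs
  imports "HOL-Probability.Probability" "HOL-Library.Landau_Symbols"
begin

definition laplace_density :: "real \<Rightarrow> real \<Rightarrow> real" where
  "laplace_density \<Delta> x = exp (- \<bar>x\<bar> / \<Delta>) / (2 * \<Delta>)"

definition cond_density ::
  "'a measure \<Rightarrow> 'a measure \<Rightarrow> ('a \<Rightarrow> real) \<Rightarrow> ('a \<Rightarrow> real \<Rightarrow> real) \<Rightarrow> bool" where
  "cond_density M G X p \<longleftrightarrow>
     (\<lambda>(\<omega>, x). p \<omega> x) \<in> borel_measurable (G \<Otimes>\<^sub>M lborel) \<and>
     (\<forall>\<omega> x. 0 \<le> p \<omega> x) \<and>
     (\<forall>A\<in>sets G. \<forall>B\<in>sets borel.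
        emeasure M (A \<inter> (X -` B \<inter> space M)) =
        (\<integral>\<^sup>+\<omega>. indicator A \<omega> * (\<integral>\<^sup>+x. indicator B x * ennreal (p \<omega> x) \<partial>lborel) \<partial>M))"

end

theory Submission
  imports Defs
begin

lemma exp_dens_int:
  assumes "0 < (a::real)"
  shows "(\<integral>\<^sup>+x. ennreal (exponential_density a x) \<partial>lborel) = 1"
proof -
  interpret prob_space "density lborel (exponential_density a)"
    using prob_space_exponential_density[OF assms] .
  have "emeasure (density lborel (exponential_density a)) UNIV = 1"
    using emeasure_space_1 by simp
  then show ?thesis by (simp add: emeasure_density)
qed

lemma lap_exp_nn:
  assumes D0: "0 < D" and D1: "D < 1"
  shows "(\<integral>\<^sup>+x. ennreal (laplace_density D x * exp (-x)) \<partial>lborel) = ennreal (1/(1-D^2))"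
proof -
  define a where "a = (1+D)/D"
  define b where "b = (1-D)/D"
  have a: "a > 0" and b: "b > 0" using D0 D1 by (auto simp: a_def b_def)
  define g where "g x = 1/(2*D*a) * exponential_density a x + 1/(2*D*b) * exponential_density b (-x)" for x
  have eq: "AE x in lborel. ennreal (laplace_density D x * exp (-x)) = ennreal (g x)"
    using AE_lborel_singleton[of 0]
  proof eventually_elim
    case (elim x)
    show ?case
    proof (cases "x > 0")
      case True
      have e: "-x/D + -x = -x * a" using D0 by (simp add: a_def field_simps)
      have "laplace_density D x * exp (-x) = exp (-x/D + -x) / (2*D)"
        using True exp_add[of "-x/D" "-x"] by (simp add: laplace_density_def)
      also have "\<dots> = exp (-x * a) / (2*D)" using e by simp
      also have "\<dots> = g x" using True a b D0 by (simp add: g_def exponential_density_def)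
      finally show ?thesis by simp
    next
      case False
      then have x: "x < 0" using elim by simp
      have e: "x/D + -x = - (-x) * b" using D0 by (simp add: b_def field_simps)
      have "laplace_density D x * exp (-x) = exp (x/D + -x) / (2*D)"
        using x exp_add[of "x/D" "-x"] by (simp add: laplace_density_def)
      also have "\<dots> = exp (- (-x) * b) / (2*D)" using e by simp
      also have "\<dots> = g x" using x a b D0 by (simp add: g_def exponential_density_def)
      finally show ?thesis by simp
    qed
  qed
  have nn: "0 \<le> exponential_density a x" "0 \<le> exponential_density b x" for x
    using a b by (auto simp: exponential_density_def)
  have "(\<integral>\<^sup>+x. ennreal (laplace_density D x * exp (-x)) \<partial>lborel) = (\<integral>\<^sup>+x. ennreal (g x) \<partial>lborel)"
    by (rule nn_integral_cong_AE[OF eq])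
  also have "\<dots> = (\<integral>\<^sup>+x. ennreal (1/(2*D*a)) * ennreal (exponential_density a x)
       + ennreal (1/(2*D*b)) * ennreal (exponential_density b (-x)) \<partial>lborel)"
    using a b D0 nn by (intro nn_integral_cong) (simp add: g_def ennreal_plus ennreal_mult[symmetric])
  also have "\<dots> = ennreal (1/(2*D*a)) * (\<integral>\<^sup>+x. ennreal (exponential_density a x) \<partial>lborel)
       + ennreal (1/(2*D*b)) * (\<integral>\<^sup>+x. ennreal (exponential_density b (-x)) \<partial>lborel)"
    by (simp add: nn_integral_add nn_integral_cmult)
  also have "(\<integral>\<^sup>+x. ennreal (exponential_density b (-x)) \<partial>lborel) = (\<integral>\<^sup>+x. ennreal (exponential_density b x) \<partial>lborel)"
    using nn_integral_real_affine[of "\<lambda>x. ennreal (exponential_density b x)" "-1" 0] by simp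
  also have "ennreal (1/(2*D*a)) * (\<integral>\<^sup>+x. ennreal (exponential_density a x) \<partial>lborel)
       + ennreal (1/(2*D*b)) * (\<integral>\<^sup>+x. ennreal (exponential_density b x) \<partial>lborel)
       = ennreal (1/(2*D*a) + 1/(2*D*b))"
    using a b D0 by (simp add: exp_dens_int ennreal_plus)
  also have "1/(2*D*a) + 1/(2*D*b) = 1/(1-D^2)"
  proof -
    have "2*D*a = 2*(1+D)" "2*D*b = 2*(1-D)" using D0 by (simp_all add: a_def b_def)
    moreover have "1-D^2 = (1+D)*(1-D)" by (simp add: power2_eq_square algebra_simps)
    moreover have "1/(2*(1+D)) + 1/(2*(1-D)) = 1/((1+D)*(1-D))"
      using D0 D1 by (simp add: divide_simps) argo
    ultimately show ?thesis by simp
  qed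
  finally show ?thesis .
qed

definition kern :: "real \<Rightarrow> real \<Rightarrow> real \<Rightarrow> real \<Rightarrow> real" where
  "kern D c y x = laplace_density D x * exp (-(c+x)) * std_normal_density (y * exp (-(c+x)))"

definition qr :: "real \<Rightarrow> real \<Rightarrow> real \<Rightarrow> real" where
  "qr D c y = (\<integral>x. kern D c y x \<partial>lborel)"

lemma laplace_density_nonneg: "0 < D \<Longrightarrow> 0 \<le> laplace_density D x"
  by (simp add: laplace_density_def)

lemma laplace_density_measurable[measurable]: "laplace_density D \<in> borel_measurable borel"
  unfolding laplace_density_def[abs_def] by measurable


lemma kern_measurable2[measurable]: "kern D c y \<in> borel_measurable borel"
  unfolding kern_def[abs_def] by measurable

lemma kern_nonneg: "0 < D \<Longrightarrow> 0 \<le> kern D c y x"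
  by (simp add: kern_def laplace_density_nonneg)

lemma std_normal_le: "std_normal_density y \<le> 1 / sqrt (2*pi)"
proof -
  have "exp (- (y\<^sup>2 / 2)) \<le> 1" by simp
  then show ?thesis by (simp add: std_normal_density_def divide_right_mono)
qed

lemma kern_bound: "0 < D \<Longrightarrow> kern D c y x \<le> exp (-c) / sqrt (2*pi) * (laplace_density D x * exp (-x))"
proof -
  assume D: "0 < D"
  have "kern D c y x \<le> laplace_density D x * exp (-(c+x)) * (1 / sqrt (2*pi))"
    unfolding kern_def using D
    by (intro mult_left_mono std_normal_le) (auto simp: laplace_density_nonneg)
  also have "\<dots> = exp (-c) / sqrt (2*pi) * (laplace_density D x * exp (-x))"
    by (simp add: exp_add[symmetric] exp_diff exp_minus field_simps)
  finally show ?thesis .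
qed

lemma lap_exp_integrable:
  assumes "0 < D" "D < 1"
  shows "integrable lborel (\<lambda>x. laplace_density D x * exp (-x))"
  by (rule integrableI_nonneg) (use assms lap_exp_nn[OF assms] in \<open>auto simp: laplace_density_nonneg\<close>)

lemma lap_exp_integral:
  assumes "0 < D" "D < 1"
  shows "(\<integral>x. laplace_density D x * exp (-x) \<partial>lborel) = 1/(1-D^2)"
proof -
  have "ennreal (\<integral>x. laplace_density D x * exp (-x) \<partial>lborel) = ennreal (1/(1-D^2))"
    using lap_exp_nn[OF assms] nn_integral_eq_integral[OF lap_exp_integrable[OF assms]] assms
    by (simp add: laplace_density_nonneg)
  moreover have "0 \<le> (\<integral>x. laplace_density D x * exp (-x) \<partial>lborel)"
    using assms by (intro integral_nonneg_AE AE_I2) (simp add: laplace_density_nonneg)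
  moreover have "0 \<le> 1/(1-D^2)" using assms power_le_one[of D 2] by simp
  ultimately show ?thesis by simp
qed

lemma kern_integrable:
  assumes "0 < D" "D < 1"
  shows "integrable lborel (kern D c y)"
  by (rule Bochner_Integration.integrable_bound[OF integrable_mult_right[OF lap_exp_integrable[OF assms], of "exp (-c) / sqrt (2*pi)"]])
     (use assms kern_bound[of D c y] kern_nonneg[of D c y] in \<open>auto simp: laplace_density_nonneg\<close>)

lemma qe_eq:
  assumes "0 < D" "D < 1"
  shows "(\<integral>\<^sup>+x. ennreal (kern D c y x) \<partial>lborel) = ennreal (qr D c y)"
  unfolding qr_def using assms
  by (intro nn_integral_eq_integral kern_integrable) (auto simp: kern_nonneg)

lemma qr_0:
  assumes "0 < D" "D < 1"
  shows "qr D c 0 = 1 / (sqrt (2 * pi) * exp c) * (1 / (1 - D^2))"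
proof -
  have "qr D c 0 = (\<integral>x. exp (-c) / sqrt (2*pi) * (laplace_density D x * exp (-x)) \<partial>lborel)"
    unfolding qr_def kern_def
    by (intro Bochner_Integration.integral_cong refl) (simp add: std_normal_density_def exp_add[symmetric] exp_diff exp_minus field_simps)
  also have "\<dots> = exp (-c) / sqrt (2*pi) * (1/(1-D^2))"
    by (simp add: lap_exp_integral[OF assms])
  finally show ?thesis by (simp add: exp_minus field_simps)
qed

lemma qr_cont:
  assumes "0 < D" "D < 1"
  shows "isCont (qr D c) y"
proof (rule continuous_at_sequentiallyI)
  fix u :: "nat \<Rightarrow> real" assume u: "u \<longlonglongrightarrow> y"
  show "(\<lambda>n. qr D c (u n)) \<longlonglongrightarrow> qr D c y"
    unfolding qr_def
  proof (rule integral_dominated_convergence[where w="\<lambda>x. exp (-c) / sqrt (2*pi) * (laplace_density D x * exp (-x))"])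
    show "integrable lborel (\<lambda>x. exp (-c) / sqrt (2*pi) * (laplace_density D x * exp (-x)))"
      using lap_exp_integrable[OF assms] by simp
    show "AE x in lborel. (\<lambda>n. kern D c (u n) x) \<longlonglongrightarrow> kern D c y x"
    proof (intro AE_I2)
      fix x
      have "isCont (\<lambda>y. kern D c y x) y" unfolding kern_def std_normal_density_def
        by (intro continuous_intros) auto
      then show "(\<lambda>n. kern D c (u n) x) \<longlonglongrightarrow> kern D c y x"
        using isCont_tendsto_compose[OF _ u] by blast
    qed
    show "AE x in lborel. norm (kern D c (u n) x) \<le> exp (-c) / sqrt (2*pi) * (laplace_density D x * exp (-x))" for n
    proof (intro AE_I2)
      fix x show "norm (kern D c (u n) x) \<le> exp (-c) / sqrt (2*pi) * (laplace_density D x * exp (-x))"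
        using kern_bound[OF assms(1), of c "u n" x] kern_nonneg[OF assms(1), of c "u n" x] by simp
    qed
  qed auto
qed

lemma scale_int:
  assumes k: "0 < (k::real)" and B[measurable]: "B \<in> sets borel"
  shows "(\<integral>\<^sup>+z. ennreal (std_normal_density z) * indicator B (k * z) \<partial>lborel)
       = (\<integral>\<^sup>+y. indicator B y * ennreal (std_normal_density (y / k) / k) \<partial>lborel)"
proof -
  have "(\<integral>\<^sup>+y. indicator B y * ennreal (std_normal_density (y / k) / k) \<partial>lborel)
      = ennreal \<bar>k\<bar> * (\<integral>\<^sup>+z. indicator B (0 + k * z) * ennreal (std_normal_density ((0 + k * z) / k) / k) \<partial>lborel)"
    using B k by (intro nn_integral_real_affine) auto
  also have "\<dots> = (\<integral>\<^sup>+z. ennreal k * (indicator B (k * z) * ennreal (std_normal_density z / k)) \<partial>lborel)"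
    using k by (subst nn_integral_cmult) auto
  also have "\<dots> = (\<integral>\<^sup>+z. ennreal (std_normal_density z) * indicator B (k * z) \<partial>lborel)"
    using k by (intro nn_integral_cong) (auto simp: ennreal_mult[symmetric] split: split_indicator)
  finally show ?thesis ..
qed

lemma kern_meas_pair[measurable]:
  "(\<lambda>p. kern D c (snd p) (fst p)) \<in> borel_measurable (lborel \<Otimes>\<^sub>M lborel)"
  unfolding kern_def normal_density_def laplace_density_def by measurable

lemma kern_meas_pair'[measurable]:
  "(\<lambda>p. kern D c (snd p) (fst p)) \<in> borel_measurable (borel \<Otimes>\<^sub>M borel)"
  unfolding kern_def normal_density_def laplace_density_def by measurable

lemma change_vars:
  assumes D: "0 < D" "D < 1" and B[measurable]: "B \<in> sets borel"
  shows "(\<integral>\<^sup>+x. ennreal (laplace_density D x) * (\<integral>\<^sup>+z. ennreal (std_normal_density z) * indicator B (exp (c + x) * z) \<partial>lborel) \<partial>lborel)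
       = (\<integral>\<^sup>+y. indicator B y * ennreal (qr D c y) \<partial>lborel)"
proof -
  have "(\<integral>\<^sup>+x. ennreal (laplace_density D x) * (\<integral>\<^sup>+z. ennreal (std_normal_density z) * indicator B (exp (c + x) * z) \<partial>lborel) \<partial>lborel)
      = (\<integral>\<^sup>+x. (\<integral>\<^sup>+y. indicator B y * ennreal (kern D c y x) \<partial>lborel) \<partial>lborel)"
  proof (intro nn_integral_cong)
    fix x :: real
    have "ennreal (laplace_density D x) * (\<integral>\<^sup>+z. ennreal (std_normal_density z) * indicator B (exp (c + x) * z) \<partial>lborel)
       = ennreal (laplace_density D x) * (\<integral>\<^sup>+y. indicator B y * ennreal (std_normal_density (y / exp (c + x)) / exp (c + x)) \<partial>lborel)"
      using B by (simp add: scale_int)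
    also have "\<dots> = (\<integral>\<^sup>+y. ennreal (laplace_density D x) * (indicator B y * ennreal (std_normal_density (y / exp (c + x)) / exp (c + x))) \<partial>lborel)"
      using B by (subst nn_integral_cmult) auto
    also have "\<dots> = (\<integral>\<^sup>+y. indicator B y * ennreal (kern D c y x) \<partial>lborel)"
    proof (intro nn_integral_cong)
      fix y :: real
      have e: "std_normal_density (y / exp (c + x)) / exp (c + x) = exp (-(c+x)) * std_normal_density (y * exp (-(c+x)))"
        unfolding exp_minus by (simp add: divide_inverse mult.commute)
      show "ennreal (laplace_density D x) * (indicator B y * ennreal (std_normal_density (y / exp (c + x)) / exp (c + x)))
          = indicator B y * ennreal (kern D c y x)"
        unfolding e kern_def using D
        by (auto simp: ennreal_mult[symmetric] laplace_density_nonneg mult.assoc split: split_indicator)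
    qed
    finally show "ennreal (laplace_density D x) * (\<integral>\<^sup>+z. ennreal (std_normal_density z) * indicator B (exp (c + x) * z) \<partial>lborel)
       = (\<integral>\<^sup>+y. indicator B y * ennreal (kern D c y x) \<partial>lborel)" .
  qed
  also have "\<dots> = (\<integral>\<^sup>+y. (\<integral>\<^sup>+x. indicator B y * ennreal (kern D c y x) \<partial>lborel) \<partial>lborel)"
    using B by (intro lborel_pair.Fubini'[symmetric]) measurable
  also have "\<dots> = (\<integral>\<^sup>+y. indicator B y * ennreal (qr D c y) \<partial>lborel)"
    using D B by (intro nn_integral_cong) (simp add: nn_integral_cmult qe_eq)
  finally show ?thesis .
qed

definition qm :: "real \<Rightarrow> real \<Rightarrow> real \<Rightarrow> real" where
  "qm D c y = enn2real (\<integral>\<^sup>+x. ennreal (kern D c y x) \<partial>lborel)"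

lemma fst_borel_rr[measurable]: "(fst :: real \<times> real \<Rightarrow> real) \<in> borel_measurable borel"
  using measurable_fst[of "borel :: real measure" "borel :: real measure"] by (simp add: borel_prod)

lemma snd_borel_rr[measurable]: "(snd :: real \<times> real \<Rightarrow> real) \<in> borel_measurable borel"
  using measurable_snd[of "borel :: real measure" "borel :: real measure"] by (simp add: borel_prod)

lemma kern_meas3[measurable]:
  "(\<lambda>p. kern D (fst (fst p)) (snd (fst p)) (snd p)) \<in> borel_measurable ((borel \<Otimes>\<^sub>M borel) \<Otimes>\<^sub>M borel)"
  unfolding kern_def normal_density_def laplace_density_def by measurable

lemma qm_meas[measurable]: "(\<lambda>p. qm D (fst p) (snd p)) \<in> borel_measurable (borel \<Otimes>\<^sub>M borel)"
  unfolding qm_def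
  by measurable

lemma qm_eq: "0 < D \<Longrightarrow> D < 1 \<Longrightarrow> qm D c y = qr D c y"
  unfolding qm_def by (simp add: qe_eq qr_def kern_integrable integral_nonneg_AE kern_nonneg)

lemma PiM_distr_meas:
  assumes "h \<in> borel_measurable (\<Pi>\<^sub>M i\<in>J. (borel :: ('b::topological_space) measure))"
  shows "h \<in> borel_measurable (\<Pi>\<^sub>M i\<in>J. distr M borel (W i))"
proof -
  have "sets (\<Pi>\<^sub>M i\<in>J. distr M borel (W i)) = sets (\<Pi>\<^sub>M i\<in>J. (borel :: 'b measure))"
    by (rule sets_PiM_cong) simp_all
  from measurable_cong_sets[OF this refl] assms show ?thesis by simp
qed

lemma indep_compute:
  fixes M :: "'a measure" and G :: "'a measure"
  assumes P: "prob_space M" and sub: "subalgebra M G"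
    and Hm[measurable]: "Hb \<in> borel_measurable G"
    and D: "0 < D" "D < 1"
    and Xd: "distributed M lborel X (\<lambda>x. ennreal (laplace_density D x))"
    and Zd: "distributed M lborel Z (\<lambda>x. ennreal (std_normal_density x))"
    and ind: "prob_space.indep_sets M (\<lambda>i::nat. if i = 0 then sets G
                     else if i = 1 then {X -` B \<inter> space M | B. B \<in> sets borel}
                     else {Z -` B \<inter> space M | B. B \<in> sets borel}) {0, 1, 2}"
    and A: "A \<in> sets G" and B[measurable]: "B \<in> sets borel"
  shows "emeasure M (A \<inter> ((\<lambda>\<omega>. exp (Hb \<omega> + X \<omega>) * Z \<omega>) -` B \<inter> space M))
       = (\<integral>\<^sup>+\<omega>. indicator A \<omega> * (\<integral>\<^sup>+y. indicator B y * ennreal (qm D (Hb \<omega>) y) \<partial>lborel) \<partial>M)"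
proof -
  interpret prob_space M by (rule P)
  have Xm[measurable]: "X \<in> borel_measurable M"
    using Xd by (simp add: distributed_def)
  have Zm[measurable]: "Z \<in> borel_measurable M"
    using Zd by (simp add: distributed_def)
  have Hm'[measurable]: "Hb \<in> borel_measurable M" using measurable_from_subalg[OF sub Hm] .
  have AG[measurable]: "A \<in> sets G" by (rule A)
  have Am[measurable]: "A \<in> sets M" using sub A by (auto simp: subalgebra_def)
  have spG: "space G = space M" using sub by (auto simp: subalgebra_def)
  define V where "V i \<omega> = (if i = (0::nat) then (Hb \<omega>, indicator A \<omega> :: real) else if i = 1 then (X \<omega>, 0) else (Z \<omega>, 0))" for i \<omega>
  define I where "I = {0,1,2::nat}"
  have V0G: "V 0 \<in> measurable G borel" unfolding V_def by simp
  have Vm[measurable]: "random_variable borel (V i)" for i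
    unfolding V_def by simp
  have indV: "indep_vars (\<lambda>_. borel) V I"
    unfolding indep_vars_def2
  proof
    show "\<forall>i\<in>I. random_variable borel (V i)" using Vm by simp
    show "indep_sets (\<lambda>i. {V i -` S \<inter> space M | S. S \<in> sets borel}) I"
    proof (rule indep_sets_mono_sets[OF ind[folded I_def]])
      fix i assume "i \<in> I"
      then consider "i = 0" | "i = 1" | "i = 2" by (auto simp: I_def)
      then show "{V i -` S \<inter> space M | S. S \<in> sets borel} \<subseteq> (if i = 0 then sets G
                     else if i = 1 then {X -` B \<inter> space M | B. B \<in> sets borel}
                     else {Z -` B \<inter> space M | B. B \<in> sets borel})"
      proof cases
        case 1
        show ?thesis using 1 measurable_sets[OF V0G] spG by auto
      next
        case 2
        { fix S :: "(real \<times> real) set" assume S: "S \<in> sets borel"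
          have "(\<lambda>x::real. (x, 0::real)) -` S \<inter> space borel \<in> sets borel"
            by (rule measurable_sets[OF _ S]) simp
          moreover have "V 1 -` S \<inter> space M = X -` ((\<lambda>x::real. (x, 0::real)) -` S \<inter> space borel) \<inter> space M"
            by (auto simp: V_def)
          ultimately have "\<exists>B. V 1 -` S \<inter> space M = X -` B \<inter> space M \<and> B \<in> sets borel" by blast }
        then show ?thesis using 2 by auto
      next
        case 3
        { fix S :: "(real \<times> real) set" assume S: "S \<in> sets borel"
          have "(\<lambda>x::real. (x, 0::real)) -` S \<inter> space borel \<in> sets borel"
            by (rule measurable_sets[OF _ S]) simp
          moreover have "V 2 -` S \<inter> space M = Z -` ((\<lambda>x::real. (x, 0::real)) -` S \<inter> space borel) \<inter> space M"
            by (auto simp: V_def)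
          ultimately have "\<exists>B. V 2 -` S \<inter> space M = Z -` B \<inter> space M \<and> B \<in> sets borel" by blast }
        then show ?thesis using 3 by auto
      qed
    qed
  qed
  have distrPi: "distr M (\<Pi>\<^sub>M i\<in>I. borel) (\<lambda>x. \<lambda>i\<in>I. V i x) = (\<Pi>\<^sub>M i\<in>I. distr M borel (V i))"
    using indV indep_vars_iff_distr_eq_PiM[where I=I and M'="\<lambda>_. borel" and X=V] Vm by (simp add: I_def)
  interpret PS: product_sigma_finite "\<lambda>i. distr M borel (V i)"
    unfolding product_sigma_finite_def
  proof
    fix i show "sigma_finite_measure (distr M borel (V i))"
      using prob_space_distr[OF Vm[of i]] by (simp add: prob_space_imp_sigma_finite)
  qed
  define g where "g y0 a b = ennreal (snd y0) * indicator B (exp (fst y0 + fst a) * fst b)"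
    for y0 a b :: "real \<times> real"
  define f where "f v = g (v 0) (v 1) (v 2)" for v :: "nat \<Rightarrow> real \<times> real"
  have fm0: "f \<in> borel_measurable (\<Pi>\<^sub>M i\<in>I. borel)"
    unfolding f_def g_def I_def by measurable
  have fm: "f \<in> borel_measurable (\<Pi>\<^sub>M i\<in>I. distr M borel (V i))"
  proof -
    have "sets (\<Pi>\<^sub>M i\<in>I. distr M borel (V i)) = sets (\<Pi>\<^sub>M i\<in>I. (borel :: (real \<times> real) measure))"
      by (rule sets_PiM_cong) simp_all
    from measurable_cong_sets[OF this refl] fm0 show ?thesis by simp
  qed
  define K where "K s = (\<integral>\<^sup>+z. ennreal (std_normal_density z) * indicator B (exp s * z) \<partial>lborel)" for s
  define Q where "Q c = (\<integral>\<^sup>+y. indicator B y * ennreal (qm D c y) \<partial>lborel)" for c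
  have Km[measurable]: "K \<in> borel_measurable borel" unfolding K_def by measurable
  have Qm[measurable]: "Q \<in> borel_measurable borel" unfolding Q_def by measurable
  have gm[measurable]: "g y0 y1 \<in> borel_measurable borel" for y0 y1 unfolding g_def by measurable
  have inner2: "(\<integral>\<^sup>+y2. g y0 y1 y2 \<partial>distr M borel (V 2)) = ennreal (snd y0) * K (fst y0 + fst y1)" for y0 y1
  proof -
    have "(\<integral>\<^sup>+y2. g y0 y1 y2 \<partial>distr M borel (V 2)) = (\<integral>\<^sup>+\<omega>. g y0 y1 (V 2 \<omega>) \<partial>M)"
      by (subst nn_integral_distr) auto
    also have "\<dots> = (\<integral>\<^sup>+\<omega>. ennreal (snd y0) * indicator B (exp (fst y0 + fst y1) * Z \<omega>) \<partial>M)"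
      by (simp add: g_def V_def)
    also have "\<dots> = ennreal (snd y0) * (\<integral>\<^sup>+\<omega>. indicator B (exp (fst y0 + fst y1) * Z \<omega>) \<partial>M)"
      by (subst nn_integral_cmult) auto
    also have "(\<integral>\<^sup>+\<omega>. indicator B (exp (fst y0 + fst y1) * Z \<omega>) \<partial>M) = K (fst y0 + fst y1)"
      unfolding K_def by (subst distributed_nn_integral[OF Zd]) auto
    finally show ?thesis .
  qed
  have inner1: "(\<integral>\<^sup>+x. f (x(0 := y0)) \<partial>(\<Pi>\<^sub>M i\<in>{1,2}. distr M borel (V i))) = ennreal (snd y0) * Q (fst y0)" for y0
  proof -
    have m2: "(\<lambda>x. g y0 (x 1) (x 2)) \<in> borel_measurable (\<Pi>\<^sub>M i\<in>insert 1 {2}. distr M borel (V i))"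
      by (rule PiM_distr_meas) (simp add: g_def)
    have "(\<integral>\<^sup>+x. f (x(0 := y0)) \<partial>(\<Pi>\<^sub>M i\<in>{1,2}. distr M borel (V i)))
        = (\<integral>\<^sup>+x. g y0 (x 1) (x 2) \<partial>(\<Pi>\<^sub>M i\<in>insert 1 {2}. distr M borel (V i)))"
      by (simp add: f_def)
    also have "\<dots> = (\<integral>\<^sup>+y1. (\<integral>\<^sup>+x. g y0 ((x(1 := y1)) 1) ((x(1 := y1)) 2) \<partial>(\<Pi>\<^sub>M i\<in>{2}. distr M borel (V i))) \<partial>distr M borel (V 1))"
      using m2 by (subst PS.product_nn_integral_insert_rev) auto
    also have "\<dots> = (\<integral>\<^sup>+y1. (\<integral>\<^sup>+y2. g y0 y1 y2 \<partial>distr M borel (V 2)) \<partial>distr M borel (V 1))"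
    proof (intro nn_integral_cong)
      fix y1
      have gm2: "g y0 y1 \<in> borel_measurable (distr M borel (V 2))" by simp
      show "(\<integral>\<^sup>+x. g y0 ((x(1 := y1)) 1) ((x(1 := y1)) 2) \<partial>(\<Pi>\<^sub>M i\<in>{2}. distr M borel (V i)))
          = (\<integral>\<^sup>+y2. g y0 y1 y2 \<partial>distr M borel (V 2))"
        using PS.product_nn_integral_singleton[OF gm2] by simp
    qed
    also have "\<dots> = (\<integral>\<^sup>+y1. ennreal (snd y0) * K (fst y0 + fst y1) \<partial>distr M borel (V 1))"
      by (simp add: inner2)
    also have "\<dots> = (\<integral>\<^sup>+\<omega>. ennreal (snd y0) * K (fst y0 + X \<omega>) \<partial>M)"
      by (subst nn_integral_distr) (auto simp: V_def)
    also have "\<dots> = ennreal (snd y0) * (\<integral>\<^sup>+\<omega>. K (fst y0 + X \<omega>) \<partial>M)"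
      by (subst nn_integral_cmult) auto
    also have "(\<integral>\<^sup>+\<omega>. K (fst y0 + X \<omega>) \<partial>M) = (\<integral>\<^sup>+x. ennreal (laplace_density D x) * K (fst y0 + x) \<partial>lborel)"
      by (subst distributed_nn_integral[OF Xd]) auto
    also have "\<dots> = (\<integral>\<^sup>+y. indicator B y * ennreal (qr D (fst y0) y) \<partial>lborel)"
      unfolding K_def by (rule change_vars[OF D B])
    also have "\<dots> = Q (fst y0)"
      unfolding Q_def using D by (simp add: qm_eq)
    finally show ?thesis .
  qed
  have step1: "emeasure M (A \<inter> ((\<lambda>\<omega>. exp (Hb \<omega> + X \<omega>) * Z \<omega>) -` B \<inter> space M))
      = (\<integral>\<^sup>+\<omega>. f (\<lambda>i\<in>I. V i \<omega>) \<partial>M)"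
  proof -
    let ?S = "A \<inter> ((\<lambda>\<omega>. exp (Hb \<omega> + X \<omega>) * Z \<omega>) -` B \<inter> space M)"
    have "?S \<in> sets M"
    proof -
      have "(\<lambda>\<omega>. exp (Hb \<omega> + X \<omega>) * Z \<omega>) -` B \<inter> space M \<in> sets M"
        by (rule measurable_sets[OF _ B]) simp
      then show ?thesis using Am by auto
    qed
    then have "emeasure M ?S = (\<integral>\<^sup>+\<omega>. indicator ?S \<omega> \<partial>M)"
      by (rule nn_integral_indicator[symmetric])
    also have "\<dots> = (\<integral>\<^sup>+\<omega>. f (\<lambda>i\<in>I. V i \<omega>) \<partial>M)"
      by (intro nn_integral_cong) (auto simp: f_def g_def V_def I_def split: split_indicator)
    finally show ?thesis .
  qed
  also have "\<dots> = (\<integral>\<^sup>+v. f v \<partial>distr M (\<Pi>\<^sub>M i\<in>I. borel) (\<lambda>x. \<lambda>i\<in>I. V i x))"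
    using fm0 by (subst nn_integral_distr) (auto simp: I_def)
  also have "\<dots> = (\<integral>\<^sup>+v. f v \<partial>(\<Pi>\<^sub>M i\<in>I. distr M borel (V i)))"
    by (simp add: distrPi)
  also have "\<dots> = (\<integral>\<^sup>+y0. (\<integral>\<^sup>+x. f (x(0 := y0)) \<partial>(\<Pi>\<^sub>M i\<in>{1,2}. distr M borel (V i))) \<partial>distr M borel (V 0))"
    unfolding I_def using fm unfolding I_def by (subst PS.product_nn_integral_insert_rev) auto
  also have "\<dots> = (\<integral>\<^sup>+y0. ennreal (snd y0) * Q (fst y0) \<partial>distr M borel (V 0))"
    by (rule nn_integral_cong, rule inner1)
  also have "\<dots> = (\<integral>\<^sup>+\<omega>. ennreal (indicator A \<omega>) * Q (Hb \<omega>) \<partial>M)"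
    by (subst nn_integral_distr) (auto simp: V_def)
  also have "\<dots> = (\<integral>\<^sup>+\<omega>. indicator A \<omega> * (\<integral>\<^sup>+y. indicator B y * ennreal (qm D (Hb \<omega>) y) \<partial>lborel) \<partial>M)"
    by (intro nn_integral_cong) (simp add: Q_def split: split_indicator)
  finally show ?thesis .
qed

lemma ae_cont_eq:
  fixes f g :: "real \<Rightarrow> real"
  assumes ae: "AE y in lborel. f y = g y" and cf: "continuous_on S f" and cg: "continuous_on S g"
    and S: "open S" "x \<in> S"
  shows "f x = g x"
proof (rule ccontr)
  assume ne: "f x \<noteq> g x"
  have "continuous_on S (\<lambda>y. f y - g y)" using cf cg by (intro continuous_intros)
  then obtain e where e: "e > 0" "\<And>y. dist x y < e \<Longrightarrow> f y - g y \<noteq> 0"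
    using continuous_on_open_avoid[of S "\<lambda>y. f y - g y" x 0] S ne by auto
  from ae obtain N where N: "{y \<in> space lborel. \<not> f y = g y} \<subseteq> N" "emeasure lborel N = 0" "N \<in> sets lborel"
    by (rule AE_E)
  have "{x - e <..< x + e} \<subseteq> N"
  proof
    fix y assume "y \<in> {x - e <..< x + e}"
    then have "dist x y < e" by (auto simp: dist_real_def abs_if)
    then have "f y \<noteq> g y" using e by auto
    then show "y \<in> N" using N(1) by auto
  qed
  then have "emeasure lborel {x - e <..< x + e} \<le> emeasure lborel N"
    by (rule emeasure_mono) (use N in auto)
  then have "ennreal ((x + e) - (x - e)) \<le> 0" using N e by simp
  then show False using e by (simp add: ennreal_le_iff2) 
qed

lemma dens_unique:
  fixes M G :: "'a measure" and p r :: "'a \<Rightarrow> real \<Rightarrow> real"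
  assumes P: "prob_space M" and sub: "subalgebra M G"
    and pm: "(\<lambda>(\<omega>, x). p \<omega> x) \<in> borel_measurable (G \<Otimes>\<^sub>M lborel)"
    and rm: "(\<lambda>(\<omega>, x). r \<omega> x) \<in> borel_measurable (G \<Otimes>\<^sub>M lborel)"
    and eq: "\<And>A B. A \<in> sets G \<Longrightarrow> B \<in> sets borel \<Longrightarrow>
       (\<integral>\<^sup>+\<omega>. indicator A \<omega> * (\<integral>\<^sup>+x. indicator B x * ennreal (p \<omega> x) \<partial>lborel) \<partial>M)
     = (\<integral>\<^sup>+\<omega>. indicator A \<omega> * (\<integral>\<^sup>+x. indicator B x * ennreal (r \<omega> x) \<partial>lborel) \<partial>M)"
    and fin: "\<And>A B. A \<in> sets G \<Longrightarrow> B \<in> sets borel \<Longrightarrow>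
       (\<integral>\<^sup>+\<omega>. indicator A \<omega> * (\<integral>\<^sup>+x. indicator B x * ennreal (r \<omega> x) \<partial>lborel) \<partial>M) \<noteq> \<infinity>"
  shows "AE \<omega> in M. AE x in lborel. ennreal (p \<omega> x) = ennreal (r \<omega> x)"
proof -
  define G' where "G' = restr_to_subalg M G"
  have sG': "sets G' = sets G" unfolding G'_def by (rule sets_restr_to_subalg[OF sub])
  have spG': "space G' = space G" unfolding G'_def using sub by (simp add: space_restr_to_subalg subalgebra_def)
  interpret G': prob_space G' unfolding G'_def by (rule prob_space_restr_to_subalg[OF sub P])
  interpret GL: pair_sigma_finite G' lborel
    by (intro pair_sigma_finite.intro G'.sigma_finite_measure_axioms lborel.sigma_finite_measure_axioms)
  have sN: "sets (G' \<Otimes>\<^sub>M lborel) = sets (G \<Otimes>\<^sub>M lborel)"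
    by (rule sets_pair_measure_cong[OF sG' refl])
  have pm'[measurable]: "(\<lambda>(\<omega>, x). p \<omega> x) \<in> borel_measurable (G' \<Otimes>\<^sub>M lborel)"
    unfolding measurable_cong_sets[OF sN refl] by (rule pm)
  have rm'[measurable]: "(\<lambda>(\<omega>, x). r \<omega> x) \<in> borel_measurable (G' \<Otimes>\<^sub>M lborel)"
    unfolding measurable_cong_sets[OF sN refl] by (rule rm)
  have rect: "emeasure (density (G' \<Otimes>\<^sub>M lborel) (\<lambda>z. ennreal (case z of (\<omega>, x) \<Rightarrow> s \<omega> x))) (A \<times> B)
      = (\<integral>\<^sup>+\<omega>. indicator A \<omega> * (\<integral>\<^sup>+x. indicator B x * ennreal (s \<omega> x) \<partial>lborel) \<partial>M)"
    if sm: "(\<lambda>(\<omega>, x). s \<omega> x) \<in> borel_measurable (G' \<Otimes>\<^sub>M lborel)"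
      and A: "A \<in> sets G" and B: "B \<in> sets borel" for s A B
  proof -
    have AB: "A \<times> B \<in> sets (G' \<Otimes>\<^sub>M lborel)" using A B sG' by auto
    have sm2: "(\<lambda>z. ennreal (case z of (\<omega>, x) \<Rightarrow> s \<omega> x) * indicator (A \<times> B) z) \<in> borel_measurable (G' \<Otimes>\<^sub>M lborel)"
      using sm AB by measurable
    have "emeasure (density (G' \<Otimes>\<^sub>M lborel) (\<lambda>z. ennreal (case z of (\<omega>, x) \<Rightarrow> s \<omega> x))) (A \<times> B)
        = (\<integral>\<^sup>+z. ennreal (case z of (\<omega>, x) \<Rightarrow> s \<omega> x) * indicator (A \<times> B) z \<partial>(G' \<Otimes>\<^sub>M lborel))"
      using AB sm by (subst emeasure_density) auto
    also have "\<dots> = (\<integral>\<^sup>+\<omega>. (\<integral>\<^sup>+x. ennreal (s \<omega> x) * indicator (A \<times> B) (\<omega>, x) \<partial>lborel) \<partial>G')"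
      using lborel.nn_integral_fst[OF sm2, symmetric] by simp
    also have "\<dots> = (\<integral>\<^sup>+\<omega>. indicator A \<omega> * (\<integral>\<^sup>+x. indicator B x * ennreal (s \<omega> x) \<partial>lborel) \<partial>G')"
    proof (intro nn_integral_cong)
      fix \<omega> assume \<omega>: "\<omega> \<in> space G'"
      have sx[measurable]: "(\<lambda>x. s \<omega> x) \<in> borel_measurable lborel"
        using measurable_Pair2[OF sm \<omega>] by simp
      have Bm[measurable]: "B \<in> sets borel" by (rule B)
      have "(\<integral>\<^sup>+x. ennreal (s \<omega> x) * indicator (A \<times> B) (\<omega>, x) \<partial>lborel)
          = (\<integral>\<^sup>+x. indicator A \<omega> * (indicator B x * ennreal (s \<omega> x)) \<partial>lborel)"
        by (intro nn_integral_cong) (auto simp: indicator_times mult_ac)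
      also have "\<dots> = indicator A \<omega> * (\<integral>\<^sup>+x. indicator B x * ennreal (s \<omega> x) \<partial>lborel)"
        by (rule nn_integral_cmult) measurable
      finally show "(\<integral>\<^sup>+x. ennreal (s \<omega> x) * indicator (A \<times> B) (\<omega>, x) \<partial>lborel)
          = indicator A \<omega> * (\<integral>\<^sup>+x. indicator B x * ennreal (s \<omega> x) \<partial>lborel)" .
    qed
    also have "\<dots> = (\<integral>\<^sup>+\<omega>. indicator A \<omega> * (\<integral>\<^sup>+x. indicator B x * ennreal (s \<omega> x) \<partial>lborel) \<partial>M)"
      unfolding G'_def
    proof (rule nn_integral_subalgebra2[OF sub])
      have "(\<lambda>\<omega>. indicator A \<omega> * (\<integral>\<^sup>+x. indicator B x * ennreal (s \<omega> x) \<partial>lborel)) \<in> borel_measurable G'"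
        using sm A B sG' by measurable
      then show "(\<lambda>\<omega>. indicator A \<omega> * (\<integral>\<^sup>+x. indicator B x * ennreal (s \<omega> x) \<partial>lborel)) \<in> borel_measurable G"
        unfolding measurable_cong_sets[OF sG'[symmetric] refl] .
    qed
    finally show ?thesis .
  qed
  define P1 where "P1 = density (G' \<Otimes>\<^sub>M lborel) (\<lambda>z. ennreal (case z of (\<omega>, x) \<Rightarrow> p \<omega> x))"
  define P2 where "P2 = density (G' \<Otimes>\<^sub>M lborel) (\<lambda>z. ennreal (case z of (\<omega>, x) \<Rightarrow> r \<omega> x))"
  let ?E = "{a \<times> b | a b. a \<in> sets G' \<and> b \<in> sets lborel}"
  have "P1 = P2"
  proof (rule measure_eqI_generator_eq[where E="?E" and \<Omega>="space G' \<times> space lborel"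
        and A="\<lambda>i. space G' \<times> {- real i .. real i}"])
    show "Int_stable ?E" by (rule Int_stable_pair_measure_generator)
    show "?E \<subseteq> Pow (space G' \<times> space lborel)" by (rule pair_measure_closed)
    show "emeasure P1 X = emeasure P2 X" if "X \<in> ?E" for X
    proof -
      from that obtain a b where X: "X = a \<times> b" "a \<in> sets G" "b \<in> sets borel" using sG' by auto
      show ?thesis unfolding P1_def P2_def X(1)
        using rect[OF pm' X(2,3)] rect[OF rm' X(2,3)] eq[OF X(2,3)] by simp
    qed
    show "sets P1 = sigma_sets (space G' \<times> space lborel) ?E"
      unfolding P1_def by (simp add: sets_pair_measure)
    show "sets P2 = sigma_sets (space G' \<times> space lborel) ?E"
      unfolding P2_def by (simp add: sets_pair_measure)
    show "range (\<lambda>i. space G' \<times> {- real i .. real i}) \<subseteq> ?E"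
    proof (clarsimp)
      fix i :: nat
      show "\<exists>a b. space G' \<times> {- real i..real i} = a \<times> b \<and> a \<in> sets G' \<and> b \<in> sets borel"
        by (intro exI[of _ "space G'"] exI[of _ "{- real i..real i}"]) auto
    qed
    show "(\<Union>i. space G' \<times> {- real i .. real i}) = space G' \<times> space lborel"
    proof (auto)
      fix x :: real
      obtain n :: nat where "\<bar>x\<bar> \<le> real n" using real_arch_simple by blast
      then show "\<exists>i. - real i \<le> x \<and> x \<le> real i" by (intro exI[of _ n]) auto
    qed
    show "emeasure P1 (space G' \<times> {- real i .. real i}) \<noteq> \<infinity>" for i
    proof -
      have a: "space G' \<in> sets G" using sG' by auto
      show ?thesis unfolding P1_def
        using rect[OF pm' a, of "{- real i .. real i}"] eq[OF a, of "{- real i .. real i}"]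
          fin[OF a, of "{- real i .. real i}"] by simp
    qed
  qed
  then have "AE z in G' \<Otimes>\<^sub>M lborel. ennreal (case z of (\<omega>, x) \<Rightarrow> p \<omega> x) = ennreal (case z of (\<omega>, x) \<Rightarrow> r \<omega> x)"
    unfolding P1_def P2_def by (intro GL.density_unique) measurable
  then have "AE \<omega> in G'. AE x in lborel. ennreal (p \<omega> x) = ennreal (r \<omega> x)"
    by (rule GL.AE_pair[where Q="\<lambda>z. ennreal (case z of (\<omega>, x) \<Rightarrow> p \<omega> x) = ennreal (case z of (\<omega>, x) \<Rightarrow> r \<omega> x)", simplified])
  then show ?thesis unfolding G'_def by (rule AE_restr_to_subalg[OF sub])
qed

theorem corollary2p2:
  fixes M :: "'a measure"
    and F :: "nat \<Rightarrow> 'a measure"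
    and Hbar h z :: "nat \<Rightarrow> 'a \<Rightarrow> real"
    and \<Delta> :: real
    and p :: "nat \<Rightarrow> 'a \<Rightarrow> real \<Rightarrow> real"
  assumes "prob_space M"
    and "filtration (space M) F"
    and "\<And>t. subalgebra M (F t)"
    and "\<And>t. t \<ge> 1 \<Longrightarrow> Hbar t \<in> borel_measurable (F (t - 1))"
    and "\<Delta> > 0"
    and "\<And>t. distributed M lborel (h t) (\<lambda>x. ennreal (laplace_density \<Delta> x))"
    and "\<And>t. distributed M lborel (z t) (\<lambda>x. ennreal (std_normal_density x))"
    and "prob_space.indep_vars M (\<lambda>_. borel) h UNIV"
    and "prob_space.indep_vars M (\<lambda>_. borel) z UNIV"
    and "\<And>t. t \<ge> 1 \<Longrightarrow> prob_space.indep_sets M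
           (\<lambda>i::nat. if i = 0 then sets (F (t - 1))
                     else if i = 1 then {h t -` B \<inter> space M | B. B \<in> sets borel}
                     else {z t -` B \<inter> space M | B. B \<in> sets borel}) {0, 1, 2}"
    and "\<And>t. t \<ge> 1 \<Longrightarrow>
           cond_density M (F (t - 1)) (\<lambda>\<omega>. exp (Hbar t \<omega> + h t \<omega>) * z t \<omega>) (p t)"
    and "\<And>t \<omega>. continuous_on (- {0}) (p t \<omega>)"
    and "\<Delta> < 1"
  shows "\<forall>t\<ge>1. AE \<omega> in M.
           p t \<omega> \<sim>[at 0] (\<lambda>_. 1 / (sqrt (2 * pi) * exp (Hbar t \<omega>)) * (1 / (1 - \<Delta>\<^sup>2)))"
proof (intro allI impI)
  fix t :: nat assume t: "t \<ge> 1"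
  interpret prob_space M by (rule assms(1))
  have D: "0 < \<Delta>" "\<Delta> < 1" using assms(5,13) by auto
  have sub: "subalgebra M (F (t - 1))" by (rule assms(3))
  have Hm[measurable]: "Hbar t \<in> borel_measurable (F (t - 1))" using assms(4)[OF t] .
  have cd: "cond_density M (F (t - 1)) (\<lambda>\<omega>. exp (Hbar t \<omega> + h t \<omega>) * z t \<omega>) (p t)"
    using assms(11)[OF t] .
  have pm: "(\<lambda>(\<omega>, x). p t \<omega> x) \<in> borel_measurable (F (t - 1) \<Otimes>\<^sub>M lborel)"
    and pnn: "\<And>\<omega> x. 0 \<le> p t \<omega> x"
    and pe: "\<And>A B. A \<in> sets (F (t - 1)) \<Longrightarrow> B \<in> sets borel \<Longrightarrow>
        emeasure M (A \<inter> ((\<lambda>\<omega>. exp (Hbar t \<omega> + h t \<omega>) * z t \<omega>) -` B \<inter> space M)) =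
        (\<integral>\<^sup>+\<omega>. indicator A \<omega> * (\<integral>\<^sup>+x. indicator B x * ennreal (p t \<omega> x) \<partial>lborel) \<partial>M)"
    using cd unfolding cond_density_def by auto
  have qe: "emeasure M (A \<inter> ((\<lambda>\<omega>. exp (Hbar t \<omega> + h t \<omega>) * z t \<omega>) -` B \<inter> space M)) =
        (\<integral>\<^sup>+\<omega>. indicator A \<omega> * (\<integral>\<^sup>+x. indicator B x * ennreal (qm \<Delta> (Hbar t \<omega>) x) \<partial>lborel) \<partial>M)"
    if "A \<in> sets (F (t - 1))" "B \<in> sets borel" for A B
    by (rule indep_compute[OF assms(1) sub Hm D assms(6)[of t] assms(7)[of t] assms(10)[OF t] that])
  have rm: "(\<lambda>(\<omega>, x). qm \<Delta> (Hbar t \<omega>) x) \<in> borel_measurable (F (t - 1) \<Otimes>\<^sub>M lborel)"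
  proof -
    have "(\<lambda>x. (Hbar t (fst x), snd x)) \<in> measurable (F (t - 1) \<Otimes>\<^sub>M lborel) (borel \<Otimes>\<^sub>M borel)"
      by measurable
    from measurable_compose[OF this qm_meas[of \<Delta>]] show ?thesis by (simp add: case_prod_beta')
  qed
  have ae: "AE \<omega> in M. AE x in lborel. ennreal (p t \<omega> x) = ennreal (qm \<Delta> (Hbar t \<omega>) x)"
  proof (rule dens_unique[OF assms(1) sub pm rm])
    fix A and B :: "real set" assume AB: "A \<in> sets (F (t - 1))" "B \<in> sets borel"
    show "(\<integral>\<^sup>+\<omega>. indicator A \<omega> * (\<integral>\<^sup>+x. indicator B x * ennreal (p t \<omega> x) \<partial>lborel) \<partial>M)
        = (\<integral>\<^sup>+\<omega>. indicator A \<omega> * (\<integral>\<^sup>+x. indicator B x * ennreal (qm \<Delta> (Hbar t \<omega>) x) \<partial>lborel) \<partial>M)"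
      using pe[OF AB, symmetric] qe[OF AB] by (rule trans)
    show "(\<integral>\<^sup>+\<omega>. indicator A \<omega> * (\<integral>\<^sup>+x. indicator B x * ennreal (qm \<Delta> (Hbar t \<omega>) x) \<partial>lborel) \<partial>M) \<noteq> \<infinity>"
      unfolding qe[OF AB, symmetric] by (simp add: emeasure_eq_measure)
  qed
  then show "AE \<omega> in M.
           p t \<omega> \<sim>[at 0] (\<lambda>_. 1 / (sqrt (2 * pi) * exp (Hbar t \<omega>)) * (1 / (1 - \<Delta>\<^sup>2)))"
  proof (rule AE_mp, intro AE_I2 impI)
    fix \<omega> assume ae\<omega>: "AE x in lborel. ennreal (p t \<omega> x) = ennreal (qm \<Delta> (Hbar t \<omega>) x)"
    define c where "c = Hbar t \<omega>"
    have ae2: "AE x in lborel. p t \<omega> x = qr \<Delta> c x"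
      using ae\<omega> proof eventually_elim
      case (elim x)
      have "0 \<le> qr \<Delta> c x" unfolding qr_def using D by (intro integral_nonneg_AE AE_I2) (simp add: kern_nonneg)
      moreover have "qm \<Delta> (Hbar t \<omega>) x = qr \<Delta> c x" unfolding c_def by (rule qm_eq[OF D])
      ultimately show ?case using elim pnn[of \<omega> x] by (metis ennreal_inj)
    qed
    have cq: "continuous_on S (qr \<Delta> c)" for S
      using qr_cont[OF D] by (intro continuous_at_imp_continuous_on) auto
    have eqx: "p t \<omega> x = qr \<Delta> c x" if "x \<noteq> 0" for x
      by (rule ae_cont_eq[OF ae2 assms(12) cq]) (use that in auto)
    have "(qr \<Delta> c \<longlongrightarrow> qr \<Delta> c 0) (at 0)"
      using qr_cont[OF D, where c=c and y=0] by (simp add: isCont_def)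
    then have lim: "(p t \<omega> \<longlongrightarrow> qr \<Delta> c 0) (at 0)"
    proof (rule tendsto_cong[THEN iffD1, rotated])
      show "\<forall>\<^sub>F x in at 0. qr \<Delta> c x = p t \<omega> x"
        using eqx by (auto simp: eventually_at_filter)
    qed
    have nz: "qr \<Delta> c 0 \<noteq> 0"
    proof -
      have "\<Delta>^2 < 1" using D by (simp add: power_less_one_iff abs_less_iff)
      then show ?thesis using qr_0[OF D, of c] by simp
    qed
    show "p t \<omega> \<sim>[at 0] (\<lambda>_. 1 / (sqrt (2 * pi) * exp (Hbar t \<omega>)) * (1 / (1 - \<Delta>\<^sup>2)))"
      using tendsto_imp_asymp_equiv_const[OF lim nz] qr_0[OF D, of c] by (simp add: c_def)
  qed
qed

end
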